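(* Let $\mathcal{P} \subseteq \mathcal{X}$ be a finite point set, let $k \ge 1$ be an integer, let $r \in [0, k-1]$ be an integer and let $\eta \ge 1$. If $\mathrm{OPT}_{k-r}(\mathcal{P}) \le \eta \cdot \mathrm{OPT}_k(\mathcal{P})$, then $\mathrm{OPT}_k(\mathcal{P}) \le 4 \cdot \mathrm{OPT}_{k + \lfloor r/(12\eta) \rfloor}(\mathcal{P})$.
   Context: $(\mathcal{X}, d)$ is a metric space (the ground set) and $\mathcal{P} \subseteq \mathcal{X}$ is finite. For a set $\mathcal{U} \subseteq \mathcal{X}$, $\mathrm{cost}(\mathcal{U},\mathcal{P}) = \sum_{p \in \mathcal{P}} \min_{q \in \mathcal{U}} d(p,q)$. For an integer $t \ge 1$, $\mathrm{OPT}_t(\mathcal{P}) = \min_{\mathcal{U} \subseteq \mathcal{X},\, |\mathcal{U}| \le t} \mathrm{cost}(\mathcal{U},\mathcal{P})$ (the optimal "improper" $t$-median cost, where centers may be any points of $\mathcal{X}$, not necessarily of $\mathcal{P}$). *)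

theory Defs
  imports "HOL-Analysis.Analysis"
begin

definition cost :: "'a::metric_space set \<Rightarrow> 'a set \<Rightarrow> real" where
  "cost U P = (\<Sum>p\<in>P. (INF q\<in>U. dist p q))"

definition OPT :: "nat \<Rightarrow> 'a::metric_space set \<Rightarrow> real" where
  "OPT t P = (INF U\<in>{U. finite U \<and> U \<noteq> {} \<and> card U \<le> t}. cost U P)"

end

theory Submission
  imports Defs
begin

lemma infd_le:
  fixes U :: "'a::metric_space set"
  assumes "finite U" "q \<in> U" shows "(INF q\<in>U. dist p q) \<le> dist p q"
  by (rule cINF_lower) (auto intro: bdd_below_finite assms)

lemma infd_nonneg:
  fixes U :: "'a::metric_space set"
  assumes "U \<noteq> {}" shows "0 \<le> (INF q\<in>U. dist p q)"
  by (rule cINF_greatest) (auto simp: assms)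

lemma infd_ex:
  fixes U :: "'a::metric_space set"
  assumes "finite U" "U \<noteq> {}" shows "\<exists>q\<in>U. (INF q\<in>U. dist p q) = dist p q"
proof -
  have "(INF q\<in>U. dist p q) = Min ((\<lambda>q. dist p q) ` U)"
    using assms by (simp add: cInf_eq_Min)
  moreover have "Min ((\<lambda>q. dist p q) ` U) \<in> (\<lambda>q. dist p q) ` U"
    using assms by (intro Min_in) auto
  ultimately show ?thesis by auto
qed

lemma cost_nonneg:
  fixes U :: "'a::metric_space set"
  assumes "U \<noteq> {}" shows "0 \<le> cost U P"
  unfolding cost_def by (rule sum_nonneg) (rule infd_nonneg[OF assms])

lemma opt_le:
  fixes U :: "'a::metric_space set"
  assumes "finite U" "U \<noteq> {}" "card U \<le> t" shows "OPT t P \<le> cost U P"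
  unfolding OPT_def
proof (rule cINF_lower)
  show "bdd_below ((\<lambda>U. cost U P) ` {U. finite U \<and> U \<noteq> {} \<and> card U \<le> t})"
    by (rule bdd_belowI[where m=0]) (auto intro: cost_nonneg)
qed (use assms in auto)

lemma opt_nonneg:
  assumes "t \<ge> 1" shows "0 \<le> OPT t (P :: 'a::metric_space set)"
  unfolding OPT_def
proof (rule cINF_greatest)
  show "{U::'a set. finite U \<and> U \<noteq> {} \<and> card U \<le> t} \<noteq> {}"
  proof -
    have "{undefined} \<in> {U::'a set. finite U \<and> U \<noteq> {} \<and> card U \<le> t}" using assms by auto
    then show ?thesis by blast
  qed
  show "\<And>U. U \<in> {U::'a set. finite U \<and> U \<noteq> {} \<and> card U \<le> t} \<Longrightarrow> 0 \<le> cost U P"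
    by (auto intro: cost_nonneg)
qed

lemma opt_approx:
  assumes "t \<ge> 1" "e > 0"
  shows "\<exists>U::'a::metric_space set. finite U \<and> U \<noteq> {} \<and> card U \<le> t \<and> cost U P < OPT t P + e"
proof -
  have ne: "{U::'a set. finite U \<and> U \<noteq> {} \<and> card U \<le> t} \<noteq> {}"
  proof -
    have "{undefined} \<in> {U::'a set. finite U \<and> U \<noteq> {} \<and> card U \<le> t}" using assms by auto
    then show ?thesis by blast
  qed
  have bdd: "bdd_below ((\<lambda>U. cost U P) ` {U::'a set. finite U \<and> U \<noteq> {} \<and> card U \<le> t})"
    by (rule bdd_belowI[where m=0]) (auto intro: cost_nonneg)
  have "OPT t P < OPT t P + e" using assms by simp
  then have "(INF U\<in>{U::'a set. finite U \<and> U \<noteq> {} \<and> card U \<le> t}. cost U P) < OPT t P + e"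
    unfolding OPT_def .
  then show ?thesis using cINF_less_iff[OF ne bdd] by auto
qed

lemma select:
  fixes f :: "'b \<Rightarrow> real"
  shows "finite A \<Longrightarrow> card A = j + d \<Longrightarrow> \<exists>B\<subseteq>A. card B = j \<and> sum f B * card A \<le> j * sum f A"
proof (induction d arbitrary: A)
  case 0 then show ?case by auto
next
  case (Suc d)
  show ?case
  proof (cases "j = 0")
    case True then show ?thesis by (intro exI[of _ "{}"]) auto
  next
    case False
    have ne: "A \<noteq> {}" using Suc by auto
    obtain a where a: "a \<in> A" "\<And>x. x \<in> A \<Longrightarrow> f x \<le> f a"
    proof -
      have "Max (f ` A) \<in> f ` A" using Suc.prems ne by (intro Max_in) auto
      then obtain a where "a \<in> A" "f a = Max (f ` A)" by auto
      moreover have "\<And>x. x \<in> A \<Longrightarrow> f x \<le> Max (f ` A)" using Suc.prems by auto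
      ultimately show ?thesis using that by auto
    qed
    let ?A = "A - {a}"
    have cA: "card ?A = j + d" using Suc.prems a by simp
    obtain B where B: "B \<subseteq> ?A" "card B = j" "sum f B * card ?A \<le> j * sum f ?A"
      using Suc.IH[of ?A] Suc.prems cA by auto
    have sA: "sum f A = sum f ?A + f a" using Suc.prems a by (simp add: sum.remove)
    have le: "sum f ?A \<le> card ?A * f a"
      using sum_bounded_above[of ?A f "f a"] a by auto
    define n where "n = real (card ?A)"
    have n1: "n \<ge> 1" using False cA n_def by simp
    have cAA: "real (card A) = n + 1" using Suc.prems cA n_def by simp
    have "sum f B * (n+1) * n = (sum f B * n) * (n+1)" by (simp add: algebra_simps)
    also have "\<dots> \<le> (j * sum f ?A) * (n+1)" using B(3) n_def by (intro mult_right_mono) auto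
    also have "\<dots> \<le> j * (sum f ?A + f a) * n"
    proof -
      have "sum f ?A * (n+1) \<le> (sum f ?A + f a) * n" using le n_def by (simp add: algebra_simps)
      then show ?thesis by (metis (no_types, lifting) mult.assoc mult_left_mono of_nat_0_le_iff)
    qed
    finally have "sum f B * (n+1) * n \<le> j * (sum f ?A + f a) * n" .
    then have "sum f B * (n+1) \<le> j * (sum f ?A + f a)" using n1 by simp
    then show ?thesis using B sA cAA by (intro exI[of _ B]) auto
  qed
qed


lemma core:
  fixes C S P :: "'a::metric_space set" and k m r :: nat and \<eta> :: real
  assumes fP: "finite P" and fC: "finite C" and fS: "finite S" and neC: "C \<noteq> {}" and neS: "S \<noteq> {}"
    and cC: "card C \<le> k + m" and cS: "card S + r \<le> k" and k1: "k \<ge> 1"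
    and mr: "12 * \<eta> * m \<le> r" and eta: "\<eta> > 0"
  shows "OPT k P \<le> cost C P + (3 * cost C P + 2 * cost S P) / (12 * \<eta>)"
proof (cases "card C \<le> k")
  case True
  have "OPT k P \<le> cost C P" using opt_le[OF fC neC True] .
  moreover have "0 \<le> (3 * cost C P + 2 * cost S P) / (12 * \<eta>)"
    using cost_nonneg[OF neC] cost_nonneg[OF neS] eta by auto
  ultimately show ?thesis by linarith
next
  case False
  define j where "j = card C - k"
  have jm: "j \<le> m" using cC j_def by simp
  have j1: "j \<ge> 1" using False j_def by simp
  define dC where "dC p = (INF q\<in>C. dist p q)" for p
  define dS where "dS p = (INF q\<in>S. dist p q)" for p
  obtain a where a: "\<And>p. a p \<in> C \<and> dC p = dist p (a p)"
    using infd_ex[OF fC neC] unfolding dC_def by metis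
  obtain \<sigma> where sg: "\<And>p. \<sigma> p \<in> S \<and> dS p = dist p (\<sigma> p)"
    using infd_ex[OF fS neS] unfolding dS_def by metis
  have dSle: "dS p \<le> dist p s" if "s \<in> S" for p s
    unfolding dS_def using infd_le[OF fS that] .
  have "\<forall>s. \<exists>c. s \<in> \<sigma> ` C \<longrightarrow> c \<in> C \<and> \<sigma> c = s \<and> (\<forall>c'\<in>C. \<sigma> c' = s \<longrightarrow> dist s c \<le> dist s c')"
  proof (intro allI impI)
    fix s
    show "\<exists>c. s \<in> \<sigma> ` C \<longrightarrow> c \<in> C \<and> \<sigma> c = s \<and> (\<forall>c'\<in>C. \<sigma> c' = s \<longrightarrow> dist s c \<le> dist s c')"
    proof (cases "s \<in> \<sigma> ` C")
      case True
      let ?Cs = "{c\<in>C. \<sigma> c = s}"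
      have f: "finite ?Cs" using fC by simp
      have ne: "?Cs \<noteq> {}" using True by auto
      obtain q where q: "q \<in> ?Cs" "(INF q\<in>?Cs. dist s q) = dist s q" using infd_ex[OF f ne] by blast
      have "\<forall>c'\<in>C. \<sigma> c' = s \<longrightarrow> dist s q \<le> dist s c'"
        using infd_le[OF f, of _ s] q(2) by auto
      then show ?thesis using q(1) by auto
    qed auto
  qed
  then obtain kp where kp: "\<And>s. s \<in> \<sigma> ` C \<Longrightarrow> kp s \<in> C \<and> \<sigma> (kp s) = s \<and> (\<forall>c'\<in>C. \<sigma> c' = s \<longrightarrow> dist s (kp s) \<le> dist s c')"
    by metis
  define Keep where "Keep = kp ` \<sigma> ` C"
  have KC: "Keep \<subseteq> C" using kp unfolding Keep_def by auto
  have cK: "card Keep \<le> card S"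
  proof -
    have "card Keep \<le> card (\<sigma> ` C)" unfolding Keep_def by (rule card_image_le) (use fC in auto)
    also have "\<dots> \<le> card S" using sg fS by (intro card_mono) auto
    finally show ?thesis .
  qed
  define R where "R = C - Keep"
  have fR: "finite R" using fC R_def by auto
  have cR: "card R = card C - card Keep" unfolding R_def using KC fC by (simp add: card_Diff_subset finite_subset)
  have cRr: "card R \<ge> r" "card R = j + (card R - j)" using cR cK cS j_def False by auto
  define h where "h p = 3 * dist p (a p) + 2 * dS p" for p
  define g where "g c = sum h {p\<in>P. a p = c}" for c
  have hnn: "h p \<ge> 0" for p unfolding h_def dS_def using infd_nonneg[OF neS] by simp
  have gnn: "g c \<ge> 0" for c unfolding g_def using hnn by (simp add: sum_nonneg)
  obtain B where B: "B \<subseteq> R" "card B = j" "sum g B * card R \<le> j * sum g R"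
    using select[OF fR cRr(2), of g] by blast
  define U where "U = C - B"
  have fU: "finite U" using fC U_def by auto
  have cU: "card U = k"
  proof -
    have BC: "B \<subseteq> C" using B(1) R_def by auto
    have "card U = card C - card B" unfolding U_def using BC fC
      by (simp add: card_Diff_subset finite_subset)
    then show ?thesis using B(2) j_def False by simp
  qed
  have neU: "U \<noteq> {}" using cU k1 by auto
  have KU: "Keep \<subseteq> U" using KC B(1) unfolding U_def R_def by auto
  have pt: "(INF q\<in>U. dist p q) \<le> dist p (a p) + (if a p \<in> B then h p else 0)" for p
  proof (cases "a p \<in> B")
    case False
    then have "a p \<in> U" using a U_def by auto
    then show ?thesis using infd_le[OF fU] False by auto
  next
    case True
    define c where "c = a p"
    have cC': "c \<in> C" using a c_def by auto
    have sC: "\<sigma> c \<in> \<sigma> ` C" using cC' by auto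
    define c' where "c' = kp (\<sigma> c)"
    have c'U: "c' \<in> U" using KU sC unfolding Keep_def c'_def by auto
    have d1: "dist (\<sigma> c) c' \<le> dist (\<sigma> c) c" using kp[OF sC] cC' c'_def by auto
    have d2: "dist c (\<sigma> c) \<le> dist c (\<sigma> p)" using sg[of c] dSle[of "\<sigma> p" c] sg[of p] by auto
    have d3: "dist c (\<sigma> p) \<le> dist c p + dist p (\<sigma> p)" by (rule dist_triangle)
    have d4: "dist p c' \<le> dist p c + dist c (\<sigma> c) + dist (\<sigma> c) c'"
      by (metis add.commute add_le_cancel_left dist_triangle order_trans)
    have "(INF q\<in>U. dist p q) \<le> dist p c'" using infd_le[OF fU c'U] .
    also have "\<dots> \<le> 3 * dist p c + 2 * dist p (\<sigma> p)"
      using d1 d2 d3 d4 by (simp add: dist_commute)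
    finally have i: "(INF q\<in>U. dist p q) \<le> 3 * dist p c + 2 * dist p (\<sigma> p)" .
    have hp: "h p = 3 * dist p c + 2 * dist p (\<sigma> p)" using sg[of p] unfolding h_def c_def by simp
    have "0 \<le> dist p c" by simp
    then show ?thesis using i hp True unfolding c_def by (simp only: if_True)
  qed
  have costU: "cost U P \<le> cost C P + sum g B"
  proof -
    have "cost U P \<le> (\<Sum>p\<in>P. dist p (a p) + (if a p \<in> B then h p else 0))"
      unfolding cost_def by (rule sum_mono) (rule pt)
    also have "\<dots> = cost C P + (\<Sum>p\<in>P. if a p \<in> B then h p else 0)"
      unfolding cost_def sum.distrib using a dC_def by simp
    also have "(\<Sum>p\<in>P. if a p \<in> B then h p else 0) = sum h {p\<in>P. a p \<in> B}"
      using fP by (simp add: sum.inter_filter)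
    also have "\<dots> = sum g B"
    proof -
      have fB: "finite B" using B(1) fR finite_subset by auto
      have "sum h {p\<in>P. a p \<in> B} = (\<Sum>c\<in>B. sum h {x\<in>{p\<in>P. a p \<in> B}. a x = c})"
        by (rule sum.group[symmetric]) (use fP fB in auto)
      also have "\<dots> = sum g B" unfolding g_def
      proof (rule sum.cong)
        fix c assume "c \<in> B"
        then have "{x\<in>{p\<in>P. a p \<in> B}. a x = c} = {p\<in>P. a p = c}" by auto
        then show "sum h {x\<in>{p\<in>P. a p \<in> B}. a x = c} = sum h {p\<in>P. a p = c}" by simp
      qed simp
      finally show ?thesis .
    qed
    finally show ?thesis by simp
  qed
  have G: "sum g R \<le> 3 * cost C P + 2 * cost S P"
  proof -
    have "sum g R \<le> sum g C" using R_def fC gnn by (intro sum_mono2) auto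
    also have "sum g C = sum h P" unfolding g_def
      by (rule sum.group) (use fP fC a in auto)
    also have "sum h P = 3 * cost C P + 2 * cost S P"
      unfolding h_def cost_def sum.distrib sum_distrib_left using a dC_def dS_def by simp
    finally show ?thesis .
  qed
  have "sum g B * r \<le> sum g B * card R"
    using cRr(1) gnn by (intro mult_left_mono) (auto simp: sum_nonneg)
  also have "\<dots> \<le> j * sum g R" using B(3) .
  also have "\<dots> \<le> m * (3 * cost C P + 2 * cost S P)"
    using jm G gnn by (intro mult_mono) (auto simp: sum_nonneg)
  finally have "sum g B * r \<le> m * (3 * cost C P + 2 * cost S P)" .
  moreover have "sum g B * (12 * \<eta> * m) \<le> sum g B * r"
    using mr gnn by (intro mult_left_mono) (auto simp: sum_nonneg)
  ultimately have "(sum g B * (12 * \<eta>)) * m \<le> (3 * cost C P + 2 * cost S P) * m"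
    by (simp add: algebra_simps)
  moreover have "m > 0" using jm j1 by simp
  ultimately have "sum g B * (12 * \<eta>) \<le> 3 * cost C P + 2 * cost S P" by simp
  then have "sum g B \<le> (3 * cost C P + 2 * cost S P) / (12 * \<eta>)" using eta by (simp add: field_simps)
  then show ?thesis using opt_le[OF fU neU, of k P] cU costU by simp
qed


theorem lemma4p1:
  fixes P :: "'a::metric_space set" and k r :: nat and \<eta> :: real
  assumes "finite P" and "k \<ge> 1" and "r \<le> k - 1" and "\<eta> \<ge> 1"
    and "OPT (k - r) P \<le> \<eta> * OPT k P"
  shows "OPT k P \<le> 4 * OPT (k + nat \<lfloor>real r / (12 * \<eta>)\<rfloor>) P"
proof -
  define m where "m = nat \<lfloor>real r / (12 * \<eta>)\<rfloor>"
  have eta: "\<eta> > 0" using assms(4) by simp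
  have "real m \<le> real r / (12 * \<eta>)"
  proof -
    have "0 \<le> real r / (12 * \<eta>)" using eta by simp
    then have "real m = of_int \<lfloor>real r / (12 * \<eta>)\<rfloor>" unfolding m_def by simp
    then show ?thesis by linarith
  qed
  then have mr: "12 * \<eta> * m \<le> r" using eta by (simp add: field_simps)
  define X where "X = OPT k P"
  define Y where "Y = OPT (k + m) P"
  have Y0: "0 \<le> Y" unfolding Y_def using assms(2) by (intro opt_nonneg) simp
  have main: "X \<le> 3/2 * Y + 2 * e" if e: "e > 0" for e
  proof -
    obtain C :: "'a set" where C: "finite C" "C \<noteq> {}" "card C \<le> k + m" "cost C P < Y + e"
      using opt_approx[of "k+m" e P] assms(2) e unfolding Y_def by auto
    obtain S :: "'a set" where S: "finite S" "S \<noteq> {}" "card S \<le> k - r" "cost S P < OPT (k - r) P + e"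
    proof -
      have "k - r \<ge> 1" using assms(2,3) by simp
      then show ?thesis using opt_approx[of "k-r" e P] e that by blast
    qed
    have cS: "card S + r \<le> k" using S(3) assms(2,3) by simp
    have core: "X \<le> cost C P + (3 * cost C P + 2 * cost S P) / (12 * \<eta>)"
      unfolding X_def by (rule core[OF assms(1) C(1) S(1) C(2) S(2) C(3) cS assms(2) mr eta])
    define cc where "cc = cost C P"
    define cs where "cs = cost S P"
    have cc0: "0 \<le> cc" unfolding cc_def using cost_nonneg[OF C(2)] .
    have ccY: "cc \<le> Y + e" using C(4) cc_def by simp
    have csX: "cs \<le> \<eta> * X + e" using S(4) assms(5) cs_def X_def by simp
    have "12 * \<eta> * X \<le> 12 * \<eta> * cc + 3 * cc + 2 * cs"
      using core eta unfolding cc_def[symmetric] cs_def[symmetric] by (simp add: field_simps)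
    moreover have "(12 * \<eta> + 3) * cc \<le> 15 * \<eta> * (Y + e)"
    proof -
      have "(12 * \<eta> + 3) * cc \<le> (12 * \<eta> + 3) * (Y + e)" using ccY eta by (intro mult_left_mono) auto
      also have "\<dots> \<le> 15 * \<eta> * (Y + e)" using assms(4) Y0 e by (intro mult_right_mono) auto
      finally show ?thesis .
    qed
    moreover have "e \<le> \<eta> * e" using assms(4) e by simp
    ultimately have "10 * \<eta> * X \<le> \<eta> * (15 * Y + 17 * e)" using csX by (simp add: algebra_simps)
    then have "10 * X \<le> 15 * Y + 17 * e" using eta by simp
    then show ?thesis using e by simp
  qed
  have "X \<le> 3/2 * Y"
  proof (rule field_le_epsilon)
    fix e :: real assume "0 < e"
    then show "X \<le> 3/2 * Y + e" using main[of "e/2"] by simp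
  qed
  then show ?thesis using Y0 unfolding X_def Y_def m_def by simp
qed

end
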